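(* Let $d,k\ge 0$ be integers. Then: (1) $f(k,d)\ge \frac{(k+1)(d+2t)}{(d+k+t+1)(d+t)}\ge \frac{k+1}{d+k+1}$, where $t$ is the unique integer with $1\le t\le k+1$ and $d\equiv k+1-t \pmod{k+1}$. (2) If $k\ge d$, then $f(k,d)\ge \frac{2k+2-d}{2k+2}$. Moreover, for $k\ge 1$, $f(k,1)=\frac{2k+1}{2k+2}$, attained by the graph $K_{1,k+1}\cup kK_1$ (a star with $k+1$ leaves together with $k$ isolated vertices). (3) For every finite simple graph $G$ on $n\ge 1$ vertices, $\alpha_k(G)\ge \frac{k+1}{\lceil d(G)\rceil+k+1}\,n$.
   Context: For a graph $G=(V,E)$ and an integer $k\ge 0$, a $k$-independent set is a set $S\subseteq V$ such that the induced subgraph $G[S]$ has maximum degree at most $k$; $\alpha_k(G)$ denotes the maximum cardinality of a $k$-independent set of $G$. $n(G)$ is the number of vertices and $d(G)=2|E(G)|/n(G)$ the average degree. For integers $d,k\ge 0$, $f(k,d)=\inf\left\{\frac{\alpha_k(G)}{n(G)} : G \text{ a finite simple graph with at least one vertex and } d(G)\le d\right\}$. *)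

theory Defs
  imports Complex_Main
begin

definition simple_graph :: "'a set \<Rightarrow> 'a set set \<Rightarrow> bool" where
  "simple_graph V E \<longleftrightarrow> finite V \<and> (\<forall>e\<in>E. e \<subseteq> V \<and> card e = 2)"

definition k_independent :: "'a set \<Rightarrow> 'a set set \<Rightarrow> nat \<Rightarrow> 'a set \<Rightarrow> bool" where
  "k_independent V E k S \<longleftrightarrow> S \<subseteq> V \<and> (\<forall>v\<in>S. card {u\<in>S. {u, v} \<in> E} \<le> k)"

definition alpha_k :: "'a set \<Rightarrow> 'a set set \<Rightarrow> nat \<Rightarrow> nat" where
  "alpha_k V E k = Max {card S | S. k_independent V E k S}"

definition avg_degree :: "'a set \<Rightarrow> 'a set set \<Rightarrow> real" where
  "avg_degree V E = 2 * real (card E) / real (card V)"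

text \<open>Every finite graph is isomorphic to one on natural-number
vertices, so ranging over graphs with vertex type nat is without loss of generality.\<close>
definition f :: "nat \<Rightarrow> nat \<Rightarrow> real" where
  "f k d = Inf {real (alpha_k V E k) / real (card V) | V E :: nat set set.
                  simple_graph V E \<and> V \<noteq> {} \<and> avg_degree V E \<le> real d}"

end

theory Submission
  imports Defs
begin


lemma sg_finE: "simple_graph V E \<Longrightarrow> finite E"
  unfolding simple_graph_def by (meson PowI finite_Pow_iff rev_finite_subset subsetI)

lemma edge_form: assumes "simple_graph V E" "e \<in> E" "v \<in> e"
  shows "\<exists>u. u \<noteq> v \<and> e = {u, v} \<and> u \<in> V"
proof -
  have "card e = 2" "e \<subseteq> V" using assms unfolding simple_graph_def by auto
  then obtain x y where "e = {x,y}" "x \<noteq> y" by (auto simp: card_2_iff)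
  then show ?thesis using assms(3) \<open>e \<subseteq> V\<close> by auto
qed

lemma edge_ne: assumes "simple_graph V E" "{u, v} \<in> E" shows "u \<noteq> v" "u \<in> V" "v \<in> V"
  using assms unfolding simple_graph_def by force+

lemma alpha_ex: assumes "simple_graph V E"
  shows "\<exists>S. k_independent V E k S \<and> card S = alpha_k V E k"
    and "k_independent V E k S \<Longrightarrow> card S \<le> alpha_k V E k"
proof -
  let ?C = "{card S | S. k_independent V E k S}"
  have fin: "finite V" using assms simple_graph_def by auto
  have "?C \<subseteq> {..card V}" using fin by (auto simp: k_independent_def card_mono)
  hence fC: "finite ?C" using finite_subset by blast
  have "{} \<in> {S. k_independent V E k S}" by (simp add: k_independent_def)
  hence ne: "?C \<noteq> {}" by blast
  show "\<exists>S. k_independent V E k S \<and> card S = alpha_k V E k"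
    using Max_in[OF fC ne] unfolding alpha_k_def by auto
  show "k_independent V E k S \<Longrightarrow> card S \<le> alpha_k V E k"
    unfolding alpha_k_def using fC by (auto intro: Max_ge)
qed

lemma nbr_edges: assumes "simple_graph V E" "v \<in> V"
  shows "card {e\<in>E. v \<in> e} = card {u\<in>V. {u,v} \<in> E}"
proof -
  have "{e\<in>E. v \<in> e} = (\<lambda>u. {u,v}) ` {u\<in>V. {u,v} \<in> E}"
    using edge_form[OF assms(1)] by fastforce
  moreover have "inj_on (\<lambda>u. {u,v}) {u\<in>V. {u,v} \<in> E}"
    using edge_ne[OF assms(1)] unfolding inj_on_def by (metis doubleton_eq_iff mem_Collect_eq)
  ultimately show ?thesis by (simp add: card_image)
qed

lemma delete_vertex: assumes sg: "simple_graph V E" and v: "v \<in> V"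
  shows "simple_graph (V - {v}) {e\<in>E. v \<notin> e}"
    and "card E = card {e\<in>E. v \<notin> e} + card {e\<in>E. v \<in> e}"
    and "alpha_k (V - {v}) {e\<in>E. v \<notin> e} k \<le> alpha_k V E k"
    and "card (V - {v}) = card V - 1"
proof -
  show sg': "simple_graph (V - {v}) {e\<in>E. v \<notin> e}" using sg unfolding simple_graph_def by auto
  have fE: "finite E" using sg_finE[OF sg] .
  have "E = {e\<in>E. v \<notin> e} \<union> {e\<in>E. v \<in> e}" by auto
  then show "card E = card {e\<in>E. v \<notin> e} + card {e\<in>E. v \<in> e}"
    using fE by (metis (no_types, lifting) card_Un_disjoint disjoint_iff finite_Un mem_Collect_eq)
  obtain S where S: "k_independent (V - {v}) {e\<in>E. v \<notin> e} k S" "card S = alpha_k (V - {v}) {e\<in>E. v \<notin> e} k"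
    using alpha_ex(1)[OF sg'] by blast
  have "k_independent V E k S"
    using S(1) unfolding k_independent_def
  proof (intro conjI ballI)
    assume a: "S \<subseteq> V - {v} \<and> (\<forall>w\<in>S. card {u \<in> S. {u, w} \<in> {e \<in> E. v \<notin> e}} \<le> k)"
    then show "S \<subseteq> V" by auto
    fix w assume w: "w \<in> S"
    have "{u \<in> S. {u, w} \<in> E} = {u \<in> S. {u, w} \<in> {e \<in> E. v \<notin> e}}" using a w by auto
    then show "card {u \<in> S. {u, w} \<in> E} \<le> k" using a w by simp
  qed
  then show "alpha_k (V - {v}) {e\<in>E. v \<notin> e} k \<le> alpha_k V E k" using alpha_ex(2)[OF sg] S by metis
  show "card (V - {v}) = card V - 1" using v by simp
qed



lemma lovasz:
  assumes sg: "simple_graph V E" and m: "1 \<le> m"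
    and deg: "\<forall>v\<in>V. card {u\<in>V. {u,v}\<in>E} < m*(k+1)"
  shows "\<exists>S. k_independent V E k S \<and> card V \<le> m * card S"
proof -
  have fV: "finite V" using sg simple_graph_def by auto
  have fE: "finite E" using sg_finE[OF sg] .
  define Mo where "Mo c = {e\<in>E. \<forall>x\<in>e. \<forall>y\<in>e. (c x::nat) = c y}" for c
  define mono where "mono c = card (Mo c)" for c
  obtain c where cV: "\<forall>x\<in>V. c x < m" and cmin: "\<And>c'. (\<forall>x\<in>V. c' x < m) \<Longrightarrow> mono c \<le> mono c'"
    using ex_has_least_nat[of "\<lambda>c. \<forall>x\<in>V. c x < m" "\<lambda>_. 0" mono] m by auto
  have loc: "card {u\<in>V. {u,v}\<in>E \<and> c u = c v} \<le> k" if v: "v\<in>V" for v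
  proof (rule ccontr)
    assume big: "\<not> ?thesis"
    define N where "N j = {u\<in>V. {u,v}\<in>E \<and> c u = j}" for j
    have Nall: "{u\<in>V. {u,v}\<in>E} = (\<Union>j\<in>{..<m}. N j)" using cV by (auto simp: N_def)
    have fN: "finite (N j)" for j using fV by (auto simp: N_def)
    have "card {u\<in>V. {u,v}\<in>E} = (\<Sum>j<m. card (N j))" unfolding Nall
      by (rule card_UN_disjoint) (auto simp: N_def fN[unfolded N_def])
    then obtain j where j: "j < m" "card (N j) \<le> k"
    proof -
      assume h: "\<And>j. j < m \<Longrightarrow> card (N j) \<le> k \<Longrightarrow> thesis"
      show thesis
      proof (rule ccontr)
        assume "\<not> thesis"
        hence "\<forall>j<m. k+1 \<le> card (N j)" using h by force
        hence "(\<Sum>j<m. k+1) \<le> (\<Sum>j<m. card (N j))" by (intro sum_mono) auto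
        hence "m*(k+1) \<le> card {u\<in>V. {u,v}\<in>E}" using \<open>card _ = _\<close> by simp
        thus False using deg v by auto
      qed
    qed
    define c' where "c' = c(v := j)"
    have c'V: "\<forall>x\<in>V. c' x < m" using cV j by (auto simp: c'_def)
    define A where "A = {e\<in>E. v \<notin> e \<and> (\<forall>x\<in>e. \<forall>y\<in>e. c x = c y)}"
    have A': "A = {e\<in>E. v \<notin> e \<and> (\<forall>x\<in>e. \<forall>y\<in>e. c' x = c' y)}"
      unfolding A_def c'_def by auto
    have inj: "inj_on (\<lambda>u. {u,v}) (N i)" for i
    proof (rule inj_onI)
      fix x y assume x: "x \<in> N i" and y: "y \<in> N i" and eq: "{x,v} = {y,v}"
      have "x \<noteq> v" using x edge_ne(1)[OF sg] by (auto simp: N_def)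
      thus "x = y" using eq by (auto simp: doubleton_eq_iff)
    qed
    have Bc: "{e\<in>Mo c. v \<in> e} = (\<lambda>u. {u,v}) ` N (c v)"
    proof
      show "{e\<in>Mo c. v \<in> e} \<subseteq> (\<lambda>u. {u,v}) ` N (c v)"
      proof
        fix e assume "e \<in> {e\<in>Mo c. v \<in> e}"
        hence e: "e \<in> E" "v \<in> e" "\<forall>x\<in>e. \<forall>y\<in>e. c x = c y" unfolding Mo_def by blast+
        have "\<exists>u. u \<noteq> v \<and> e = {u,v} \<and> u \<in> V" by (rule edge_form[OF sg e(1,2)])
        then obtain u where uu: "u \<noteq> v \<and> e = {u,v} \<and> u \<in> V" ..
        hence u: "u \<noteq> v" "e = {u,v}" "u \<in> V" by auto
        have "{u,v} \<in> E" using e(1) u(2) by simp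
        moreover have "c u = c v" using e(3) e(2) u(2) by blast
        ultimately have "u \<in> N (c v)" using u(3) unfolding N_def by blast
        thus "e \<in> (\<lambda>u. {u,v}) ` N (c v)" using u(2) by (rule rev_image_eqI)
      qed
      show "(\<lambda>u. {u,v}) ` N (c v) \<subseteq> {e\<in>Mo c. v \<in> e}"
        by (auto simp: N_def Mo_def)
    qed
    have Bc': "{e\<in>Mo c'. v \<in> e} = (\<lambda>u. {u,v}) ` N j"
    proof
      show "{e\<in>Mo c'. v \<in> e} \<subseteq> (\<lambda>u. {u,v}) ` N j"
      proof
        fix e assume "e \<in> {e\<in>Mo c'. v \<in> e}"
        hence e: "e \<in> E" "v \<in> e" "\<forall>x\<in>e. \<forall>y\<in>e. c' x = c' y" unfolding Mo_def by blast+
        have "\<exists>u. u \<noteq> v \<and> e = {u,v} \<and> u \<in> V" by (rule edge_form[OF sg e(1,2)])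
        then obtain u where uu: "u \<noteq> v \<and> e = {u,v} \<and> u \<in> V" ..
        hence u: "u \<noteq> v" "e = {u,v}" "u \<in> V" by auto
        have "c' u = c' v" using e(3) e(2) u(2) by blast
        then have "c u = j" using u(1) by (simp add: c'_def)
        moreover have "{u,v} \<in> E" using e(1) u(2) by simp
        ultimately have "u \<in> N j" using u(3) unfolding N_def by blast
        thus "e \<in> (\<lambda>u. {u,v}) ` N j" using u(2) by (rule rev_image_eqI)
      qed
      show "(\<lambda>u. {u,v}) ` N j \<subseteq> {e\<in>Mo c'. v \<in> e}"
        using edge_ne[OF sg] by (auto simp: N_def Mo_def c'_def)
    qed
    have split: "Mo d = A' \<union> {e\<in>Mo d. v \<in> e}" "A' \<inter> {e\<in>Mo d. v \<in> e} = {}"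
      if "A' = {e\<in>E. v \<notin> e \<and> (\<forall>x\<in>e. \<forall>y\<in>e. d x = d y)}" for d :: "'a \<Rightarrow> nat" and A'
      using that by (auto simp: Mo_def)
    have fA: "finite A" using fE by (auto simp: A_def)
    have fB: "finite {e\<in>Mo d. v \<in> e}" for d using fE by (auto simp: Mo_def)
    have "mono c = card A + card {e\<in>Mo c. v \<in> e}"
      unfolding mono_def by (subst split(1)[OF A_def], rule card_Un_disjoint[OF fA fB split(2)[OF A_def]])
    also have "card {e\<in>Mo c. v \<in> e} = card (N (c v))" unfolding Bc by (rule card_image[OF inj])
    finally have m1: "mono c = card A + card (N (c v))" .
    have "mono c' = card A + card {e\<in>Mo c'. v \<in> e}"
      unfolding mono_def by (subst split(1)[OF A'], rule card_Un_disjoint[OF fA fB split(2)[OF A']])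
    also have "card {e\<in>Mo c'. v \<in> e} = card (N j)" unfolding Bc' by (rule card_image[OF inj])
    finally have m2: "mono c' = card A + card (N j)" .
    note m1 m2
    moreover have "card (N (c v)) > k" using big by (simp add: N_def)
    ultimately have "mono c' < mono c" using j by linarith
    thus False using cmin[OF c'V] by linarith
  qed
  define P where "P i = {x\<in>V. c x = i}" for i
  have kind: "k_independent V E k (P i)" for i
    unfolding k_independent_def
  proof (intro conjI ballI)
    show "P i \<subseteq> V" by (auto simp: P_def)
    fix w assume w: "w \<in> P i"
    have "{u \<in> P i. {u, w} \<in> E} = {u\<in>V. {u,w}\<in>E \<and> c u = c w}" using w by (auto simp: P_def)
    thus "card {u \<in> P i. {u, w} \<in> E} \<le> k" using loc w by (auto simp: P_def)
  qed
  have Vall: "V = (\<Union>i\<in>{..<m}. P i)" using cV by (auto simp: P_def)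
  have fP: "finite (P i)" for i using fV by (auto simp: P_def)
  have cs: "card V = (\<Sum>i<m. card (P i))"
    by (subst Vall, rule card_UN_disjoint) (auto simp: P_def fP[unfolded P_def])
  have "\<exists>i. card V \<le> m * card (P i)"
  proof (rule ccontr)
    assume "\<not> ?thesis"
    hence "\<forall>i\<in>{..<m}. m * card (P i) < card V" using not_le by blast
    hence "(\<Sum>i<m. m * card (P i)) < (\<Sum>i<m. card V)"
      using m by (intro sum_strict_mono) (auto simp: lessThan_empty_iff)
    thus False using cs by (simp add: sum_distrib_left)
  qed
  thus ?thesis using kind by blast
qed



lemma arithB:
  fixes A B M E :: nat
  assumes h1: "2*B*M \<le> A*M + 2*E" and h2: "2*E < M*B"
  shows "2*B*(M+1) \<le> A*(M+2) + 2*E"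
proof -
  have a: "2*(B*M) \<le> A*M + 2*E" using h1 by (simp add: mult.assoc)
  have b: "2*E < B*M" using h2 by (simp add: mult.commute)
  have "B*M \<le> A*M" using a b by linarith
  moreover have "M > 0" using h2 by (cases M) auto
  ultimately have "B \<le> A" by simp
  thus ?thesis using h1 by (simp add: algebra_simps)
qed

lemma bound_step:
  assumes m: "1 \<le> m"
    and prev: "2 \<le> m \<Longrightarrow> (\<forall>(V::'a set) E. simple_graph V E \<longrightarrow>
              2*(k+1)*(m-1)*card V \<le> (k+1)*(m-1)*m*alpha_k V E k + 2*card E)"
  shows "simple_graph (V::'a set) E \<Longrightarrow> 2*(k+1)*m*card V \<le> (k+1)*m*(m+1)*alpha_k V E k + 2*card E"
proof (induction "card V" arbitrary: V E rule: less_induct)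
  case less
  note sg = less.prems
  have fV: "finite V" using sg simple_graph_def by auto
  show ?case
  proof (cases "\<exists>v\<in>V. m*(k+1) \<le> card {u\<in>V. {u,v}\<in>E}")
    case True
    then obtain v where v: "v \<in> V" "m*(k+1) \<le> card {u\<in>V. {u,v}\<in>E}" by blast
    note dv = delete_vertex[OF sg v(1)]
    have n1: "card V \<ge> 1" using v(1) fV card_0_eq by fastforce
    have IH: "2*(k+1)*m*card (V-{v}) \<le> (k+1)*m*(m+1)*alpha_k (V-{v}) {e\<in>E. v \<notin> e} k + 2*card {e\<in>E. v \<notin> e}"
      using less.hyps[OF _ dv(1)] dv(4) n1 by simp
    have D: "m*(k+1) \<le> card {e\<in>E. v \<in> e}" using v nbr_edges[OF sg v(1)] by simp
    have al: "(k+1)*m*(m+1)*alpha_k (V-{v}) {e\<in>E. v \<notin> e} k \<le> (k+1)*m*(m+1)*alpha_k V E k"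
      using dv(3) by simp
    have eq: "2*(k+1)*m*card V = 2*(k+1)*m*card (V-{v}) + 2*(m*(k+1))"
      using dv(4) n1 by (cases "card V") (auto simp: algebra_simps)
    show ?thesis using IH D al eq dv(2) by linarith
  next
    case False
    hence "\<forall>v\<in>V. card {u\<in>V. {u,v}\<in>E} < m*(k+1)" by auto
    from lovasz[OF sg m this] obtain S where S: "k_independent V E k S" "card V \<le> m * card S" by blast
    have Sa: "card S \<le> alpha_k V E k" using alpha_ex(2)[OF sg S(1)] .
    have nma: "card V \<le> m * alpha_k V E k" using S(2) Sa
      by (meson le_trans mult_le_mono2)
    show ?thesis
    proof (cases "(m-1)*(k+1)*card V \<le> 2*card E")
      case True
      have "(k+1)*(m+1)*card V \<le> (k+1)*(m+1)*(m * alpha_k V E k)" using nma by (rule mult_le_mono2)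
      moreover have "2*(k+1)*m*card V = (k+1)*(m+1)*card V + (m-1)*(k+1)*card V"
        using m by (cases m) (auto simp: algebra_simps)
      ultimately show ?thesis using True by (simp add: algebra_simps)
    next
      case False
      have m2: "2 \<le> m"
      proof (rule ccontr)
        assume "\<not> 2 \<le> m" then have "m = 1" using m by simp
        thus False using False by simp
      qed
      have P: "2*(k+1)*(m-1)*card V \<le> (k+1)*(m-1)*m*alpha_k V E k + 2*card E"
        using prev[OF m2] sg by blast
      obtain M where M: "m = M+1" using m2 by (metis Suc_eq_plus1 Suc_le_D le_SucE Suc_1)
      have h1: "2*((k+1)*card V)*M \<le> ((k+1)*m*alpha_k V E k)*M + 2*card E"
        using P M by (simp add: algebra_simps)
      have h2: "2*card E < M*((k+1)*card V)" using False M by (simp add: algebra_simps)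
      have "2*((k+1)*card V)*(M+1) \<le> ((k+1)*m*alpha_k V E k)*(M+2) + 2*card E"
        by (rule arithB[OF h1 h2])
      thus ?thesis using M by (simp add: algebra_simps)
    qed
  qed
qed

lemma bound:
  assumes "1 \<le> m" "simple_graph (V::'a set) E"
  shows "2*(k+1)*m*card V \<le> (k+1)*m*(m+1)*alpha_k V E k + 2*card E"
  using assms
proof (induction m arbitrary: V E rule: nat_induct_at_least)
  case base
  show ?case by (rule bound_step[OF le_refl _ base]) simp
next
  case (Suc m)
  show ?case by (rule bound_step[OF _ _ Suc.prems]) (use Suc.IH Suc.hyps in auto)
qed



lemma ratio_bound:
  assumes sg: "simple_graph (V::'a set) E" and ne: "V \<noteq> {}" and dE: "2*card E \<le> d*card V" and M: "1 \<le> M"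
  shows "(real (2*(k+1)*M) - real d) / real ((k+1)*M*(M+1)) \<le> real (alpha_k V E k) / real (card V)"
proof -
  have n: "card V > 0" using sg ne unfolding simple_graph_def by auto
  have "2*(k+1)*M*card V \<le> (k+1)*M*(M+1)*alpha_k V E k + d*card V"
    using bound[OF M sg, of k] dE by linarith
  hence "real (2*(k+1)*M*card V) \<le> real ((k+1)*M*(M+1)*alpha_k V E k) + real (d*card V)"
    by (metis of_nat_add of_nat_le_iff)
  hence h: "(real (2*(k+1)*M) - real d) * real (card V) \<le> real ((k+1)*M*(M+1)) * real (alpha_k V E k)"
    by (simp add: algebra_simps)
  have "(k+1)*M*(M+1) > 0" using M by simp
  hence c: "real ((k+1)*M*(M+1)) > 0" by (simp only: of_nat_0_less_iff)
  show ?thesis using h c n by (simp add: divide_simps mult.commute)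
qed

lemma t_M: fixes d t k :: nat assumes "1 \<le> t" "t \<le> k+1" "d mod (k+1) = (k+1-t) mod (k+1)"
  shows "\<exists>M\<ge>1. (k+1)*M = d+t"
proof -
  have "k+1-t < k+1" using assms(1) by linarith
  hence r: "d mod (k+1) = k+1-t" using assms(3) by simp
  have "d = (k+1)*(d div (k+1)) + d mod (k+1)" by (rule mult_div_mod_eq[symmetric])
  hence "d + t = (k+1)*(d div (k+1) + 1)" using r assms(2) by (simp add: algebra_simps)
  thus ?thesis by (metis le_add2)
qed

lemma t_val: assumes "1 \<le> M" "(k+1)*M = d+t"
  shows "(real (2*(k+1)*M) - real d) / real ((k+1)*M*(M+1))
       = real (k + 1) * real (d + 2 * t) / (real (d + k + t + 1) * real (d + t))"
proof -
  have "2*(k+1)*M = (d + 2*t) + d" using assms(2) by (simp add: mult.assoc)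
  hence e1: "real (2*(k+1)*M) - real d = real (d + 2*t)" by (metis add_diff_cancel_right' of_nat_add)
  have e2: "real ((k+1)*M*(M+1)) = real (d+t) * real (M+1)" using assms(2) by (metis of_nat_mult)
  have e3: "real (d + k + t + 1) = real (k+1) * real (M+1)"
  proof -
    have "d + k + t + 1 = (k+1)*(M+1)" using assms(2) by (simp add: algebra_simps)
    thus ?thesis by (metis of_nat_mult)
  qed
  have "real (d+t) \<noteq> 0" using assms by (metis add_is_0 mult_is_0 of_nat_0_eq_iff one_neq_zero not_one_le_zero)
  moreover have "real (M+1) \<noteq> 0" "real (k+1) \<noteq> 0" by simp_all
  have gen: "a/(b*c) = K*a/((K*c)*b)" if "K \<noteq> 0" for a b c K :: real
    using that by simp
  show ?thesis unfolding e1 e2 e3 by (rule gen) simp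
qed

lemma t_ineq: assumes "1 \<le> t" "t \<le> k+1"
  shows "real (k + 1) / real (d + k + 1) \<le> real (k + 1) * real (d + 2 * t) / (real (d + k + t + 1) * real (d + t))"
proof -
  obtain s where s: "k+1 = t+s" using assms(2) le_Suc_ex by (metis le_add_diff_inverse)
  have key: "(d+k+t+1)*(d+t) \<le> (d+2*t)*(d+k+1)"
  proof -
    have a1: "d+k+t+1 = d+2*t+s" "d+k+1 = d+t+s" using s by simp_all
    have "(d+k+t+1)*(d+t) = (d+2*t)*(d+t) + s*(d+t)" unfolding a1 by (simp add: algebra_simps)
    also have "\<dots> \<le> (d+2*t)*(d+t) + s*(d+2*t)" by simp
    also have "\<dots> = (d+2*t)*(d+k+1)" unfolding a1 by (simp add: algebra_simps)
    finally show ?thesis .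
  qed
  hence "real (d+k+t+1) * real (d+t) \<le> real (d+2*t) * real (d+k+1)"
    by (metis of_nat_le_iff of_nat_mult)
  moreover have "real (d+t) > 0" "real (d+k+1) > 0" "real (d+k+t+1) > 0" using assms by auto
  ultimately show ?thesis
    by (simp add: divide_simps)
qed



lemma avg_iff: assumes "simple_graph V E" "V \<noteq> {}"
  shows "avg_degree V E \<le> real d \<longleftrightarrow> 2*card E \<le> d*card V"
proof -
  have n: "real (card V) > 0" using assms unfolding simple_graph_def by auto
  have "avg_degree V E \<le> real d \<longleftrightarrow> real (2*card E) \<le> real (d*card V)"
    unfolding avg_degree_def using n by (simp add: divide_simps)
  thus ?thesis by (simp only: of_nat_le_iff)
qed

lemma graph_t:
  assumes sg: "simple_graph (V::'a set) E" and ne: "V \<noteq> {}" and dE: "2*card E \<le> d*card V"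
    and t: "1 \<le> t" "t \<le> k+1" "d mod (k+1) = (k+1-t) mod (k+1)"
  shows "real (k + 1) * real (d + 2 * t) / (real (d + k + t + 1) * real (d + t)) \<le> real (alpha_k V E k) / real (card V)"
proof -
  obtain M where M: "1 \<le> M" "(k+1)*M = d+t" using t_M[OF t] by blast
  show ?thesis using ratio_bound[OF sg ne dE M(1), of k] t_val[OF M] by simp
qed

definition Fset :: "nat \<Rightarrow> nat \<Rightarrow> real set" where
  "Fset k d = {real (alpha_k V E k) / real (card V) | V E :: nat set set.
                  simple_graph V E \<and> V \<noteq> {} \<and> avg_degree V E \<le> real d}"

lemma f_Fset: "f k d = Inf (Fset k d)" unfolding f_def Fset_def ..

lemma Fset_ne: "Fset k d \<noteq> {}"
proof -
  have "simple_graph {0::nat} {}" by (simp add: simple_graph_def)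
  moreover have "avg_degree {0::nat} {} \<le> real d" by (simp add: avg_degree_def)
  ultimately show ?thesis unfolding Fset_def by blast
qed

lemma f_M: assumes "1 \<le> M"
  shows "(real (2*(k+1)*M) - real d) / real ((k+1)*M*(M+1)) \<le> f k d"
  unfolding f_Fset
proof (rule cInf_greatest[OF Fset_ne])
  fix x assume "x \<in> Fset k d"
  then obtain V :: "nat set" and E where x: "x = real (alpha_k V E k) / real (card V)"
    and g: "simple_graph V E" "V \<noteq> {}" "avg_degree V E \<le> real d"
    unfolding Fset_def by blast
  show "(real (2*(k+1)*M) - real d) / real ((k+1)*M*(M+1)) \<le> x"
    unfolding x by (rule ratio_bound[OF g(1,2) _ assms]) (use avg_iff[OF g(1,2)] g(3) in blast)
qed

lemma f_t: assumes t: "1 \<le> t" "t \<le> k+1" "d mod (k+1) = (k+1-t) mod (k+1)"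
  shows "real (k + 1) * real (d + 2 * t) / (real (d + k + t + 1) * real (d + t)) \<le> f k d"
proof -
  obtain M where M: "1 \<le> M" "(k+1)*M = d+t" using t_M[OF t] by blast
  show ?thesis using f_M[OF M(1), of k d] t_val[OF M] by simp
qed

lemma f_le: assumes "simple_graph (V::nat set) E" "V \<noteq> {}" "avg_degree V E \<le> real d"
  shows "f k d \<le> real (alpha_k V E k) / real (card V)"
  unfolding f_Fset
proof (rule cInf_lower)
  show "real (alpha_k V E k) / real (card V) \<in> Fset k d" using assms unfolding Fset_def by blast
  show "bdd_below (Fset k d)" unfolding Fset_def bdd_below_def
    by (rule exI[of _ 0]) auto
qed



lemma ex_mem: "{u, w} \<in> {{0, i} | i::nat. 1 \<le> i \<and> i \<le> k + 1} \<longleftrightarrow>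
   (u = 0 \<and> 1 \<le> w \<and> w \<le> k+1) \<or> (w = 0 \<and> 1 \<le> u \<and> u \<le> k+1)"
  by (auto simp: doubleton_eq_iff)

lemma example:
  assumes k: "k \<ge> 1"
  defines "V \<equiv> {0..<2 * k + 2}" and "E \<equiv> {{0, i} | i::nat. 1 \<le> i \<and> i \<le> k + 1}"
  shows "simple_graph V E" "avg_degree V E \<le> 1" "alpha_k V E k = 2*k+1"
proof -
  have Eim: "E = (\<lambda>i. {0,i}) ` {1..k+1}" unfolding E_def by auto
  have inj: "inj_on (\<lambda>i::nat. {0,i}) {1..k+1}" unfolding inj_on_def by (auto simp: doubleton_eq_iff)
  have cE: "card E = k+1" unfolding Eim using card_image[OF inj] by simp
  show sg: "simple_graph V E" unfolding simple_graph_def V_def Eim by auto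
  have cV: "card V = 2*k+2" unfolding V_def by simp
  show "avg_degree V E \<le> 1" unfolding avg_degree_def cE cV by simp
  have mem: "{u,w} \<in> E \<longleftrightarrow> (u = 0 \<and> 1 \<le> w \<and> w \<le> k+1) \<or> (w = 0 \<and> 1 \<le> u \<and> u \<le> k+1)" for u w
    unfolding E_def by (rule ex_mem)
  have ind: "k_independent V E k (V - {1})"
    unfolding k_independent_def
  proof (intro conjI ballI)
    show "V - {1} \<subseteq> V" by auto
    fix w assume w: "w \<in> V - {1}"
    show "card {u \<in> V - {1}. {u, w} \<in> E} \<le> k"
    proof (cases "w = 0")
      case True
      have "{u \<in> V - {1}. {u, w} \<in> E} = {2..k+1}" unfolding mem True V_def by auto
      thus ?thesis by simp
    next
      case False
      have "{u \<in> V - {1}. {u, w} \<in> E} \<subseteq> {0}" unfolding mem using False by auto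
      hence "card {u \<in> V - {1}. {u, w} \<in> E} \<le> card {0::nat}" by (intro card_mono) auto
      thus ?thesis using k by simp
    qed
  qed
  have lo: "2*k+1 \<le> alpha_k V E k"
  proof -
    have "card (V - {1}) = 2*k+1" unfolding V_def by simp
    thus ?thesis using alpha_ex(2)[OF sg ind] by simp
  qed
  obtain S where S: "k_independent V E k S" "card S = alpha_k V E k" using alpha_ex(1)[OF sg] by blast
  have "card S \<le> 2*k+1"
  proof (rule ccontr)
    assume "\<not> ?thesis"
    hence c: "card S \<ge> card V" using cV by simp
    have SV: "S \<subseteq> V" using S(1) unfolding k_independent_def by (rule conjunct1)
    have "S = V" using card_seteq[OF _ SV c] unfolding V_def by simp
    moreover have "0 \<in> V" unfolding V_def by simp
    ultimately have "card {u \<in> V. {u, 0} \<in> E} \<le> k" using S(1) unfolding k_independent_def by blast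
    moreover have "{u \<in> V. {u, 0} \<in> E} = {1..k+1}" unfolding mem V_def by auto
    ultimately show False by simp
  qed
  thus "alpha_k V E k = 2*k+1" using lo S(2) by simp
qed



theorem mainTheorem7:
  fixes k d :: nat
  shows
    "(\<forall>t::nat. 1 \<le> t \<and> t \<le> k + 1 \<and> d mod (k + 1) = (k + 1 - t) mod (k + 1) \<longrightarrow>
        f k d \<ge> real (k + 1) * real (d + 2 * t) / (real (d + k + t + 1) * real (d + t)) \<and>
        real (k + 1) * real (d + 2 * t) / (real (d + k + t + 1) * real (d + t))
          \<ge> real (k + 1) / real (d + k + 1))
     \<and> (k \<ge> d \<longrightarrow> f k d \<ge> (2 * real k + 2 - real d) / (2 * real k + 2))
     \<and> (k \<ge> 1 \<longrightarrow>
          f k 1 = (2 * real k + 1) / (2 * real k + 2) \<and>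
          (let V = {0..<2 * k + 2}; E = {{0, i} | i::nat. 1 \<le> i \<and> i \<le> k + 1} in
             simple_graph V E \<and> avg_degree V E \<le> 1 \<and>
             real (alpha_k V E k) / real (card V) = (2 * real k + 1) / (2 * real k + 2)))
     \<and> (\<forall>(V :: 'a set) E. simple_graph V E \<and> V \<noteq> {} \<longrightarrow>
          real (alpha_k V E k) \<ge>
            real (k + 1) / (real_of_int \<lceil>avg_degree V E\<rceil> + real k + 1) * real (card V))"
proof (intro conjI allI impI)
  fix t :: nat assume t: "1 \<le> t \<and> t \<le> k + 1 \<and> d mod (k + 1) = (k + 1 - t) mod (k + 1)"
  show "f k d \<ge> real (k + 1) * real (d + 2 * t) / (real (d + k + t + 1) * real (d + t))"
    using f_t t by blast
  show "real (k + 1) * real (d + 2 * t) / (real (d + k + t + 1) * real (d + t)) \<ge> real (k + 1) / real (d + k + 1)"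
    using t_ineq t by blast
next
  assume "k \<ge> d"
  show "f k d \<ge> (2 * real k + 2 - real d) / (2 * real k + 2)"
    using f_M[of 1 k d] by (simp add: algebra_simps)
next
  assume k: "1 \<le> k"
  let ?V = "{0..<2 * k + 2}" and ?E = "{{0, i} | i::nat. 1 \<le> i \<and> i \<le> k + 1}"
  note ex = example[OF k]
  have cV: "card ?V = 2*k+2" by simp
  have r: "real (alpha_k ?V ?E k) / real (card ?V) = (2 * real k + 1) / (2 * real k + 2)"
    unfolding ex(3) cV by (simp add: add.commute)
  show "let V = ?V; E = ?E in simple_graph V E \<and> avg_degree V E \<le> 1 \<and>
             real (alpha_k V E k) / real (card V) = (2 * real k + 1) / (2 * real k + 2)"
    unfolding Let_def using ex(1,2) r by simp
  have "f k 1 \<le> real (alpha_k ?V ?E k) / real (card ?V)"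
    by (rule f_le[OF ex(1)]) (use ex(2) in simp_all)
  hence "f k 1 \<le> (2 * real k + 1) / (2 * real k + 2)" using r by simp
  moreover have "(2 * real k + 1) / (2 * real k + 2) \<le> f k 1"
    using f_M[of 1 k 1] by (simp add: algebra_simps)
  ultimately show "f k 1 = (2 * real k + 1) / (2 * real k + 2)" by simp
next
  fix V :: "'a set" and E assume a: "simple_graph V E \<and> V \<noteq> {}"
  hence sg: "simple_graph V E" and ne: "V \<noteq> {}" by auto
  define D where "D = avg_degree V E"
  have D0: "D \<ge> 0" unfolding D_def avg_degree_def by simp
  define d where "d = nat \<lceil>D\<rceil>"
  have rd: "real d = real_of_int \<lceil>D\<rceil>" unfolding d_def using D0 by simp
  have "D \<le> real d" unfolding rd by (rule le_of_int_ceiling)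
  hence dE: "2*card E \<le> d*card V" using avg_iff[OF sg ne] unfolding D_def by blast
  define t where "t = k+1 - d mod (k+1)"
  have dm: "d mod (k+1) < k+1" by simp
  have t1: "1 \<le> t" "t \<le> k+1" using dm unfolding t_def by linarith+
  have t3: "d mod (k+1) = (k+1-t) mod (k+1)" unfolding t_def using dm by simp
  have "real (k + 1) / real (d + k + 1) \<le> real (alpha_k V E k) / real (card V)"
    using t_ineq[OF t1, of d] graph_t[OF sg ne dE t1 t3] by linarith
  moreover have n: "real (card V) > 0" using sg ne unfolding simple_graph_def by auto
  ultimately have "real (k + 1) / real (d + k + 1) * real (card V) \<le> real (alpha_k V E k)"
    by (simp add: divide_simps)
  moreover have "real (d + k + 1) = real_of_int \<lceil>avg_degree V E\<rceil> + real k + 1"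
    using rd unfolding D_def by simp
  ultimately show "real (alpha_k V E k) \<ge>
            real (k + 1) / (real_of_int \<lceil>avg_degree V E\<rceil> + real k + 1) * real (card V)" by (simp add: add.commute add.left_commute)
qed

end
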